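(* For all positive integers $k,\ell,n$ there exists a graph $G$ with pathwidth at most $k+1$ such that for every graph $H$ and every path $P$, if $G$ is isomorphic to a subgraph of $H\boxtimes P\boxtimes K_\ell$, then $P_n+K_k$ is isomorphic to a subgraph of $H$.
   Context: Graphs are finite and simple. $P_n$ is the path on $n$ vertices and $K_m$ the complete graph on $m$ vertices. The complete join $G+H$ is the disjoint union of $G$ and $H$ together with all edges between $V(G)$ and $V(H)$. The strong product $G\boxtimes H$ has vertex set $V(G)\times V(H)$ with $(v,w)\sim(v',w')$ if ($v=v'$ and $ww'\in E(H)$) or ($w=w'$ and $vv'\in E(G)$) or ($vv'\in E(G)$ and $ww'\in E(H)$). Pathwidth is the usual parameter (minimum over path-decompositions of the maximum bag size minus one). *)

theory Defs
  imports Main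
begin

text \<open>A finite simple graph: a finite vertex set and a symmetric, irreflexive
edge relation on it (an edge vw is stored as both (v,w) and (w,v)).\<close>

type_synonym 'a graph = "'a set \<times> ('a \<times> 'a) set"

definition verts :: "'a graph \<Rightarrow> 'a set" where "verts G = fst G"
definition edges :: "'a graph \<Rightarrow> ('a \<times> 'a) set" where "edges G = snd G"

definition is_graph :: "'a graph \<Rightarrow> bool" where
  "is_graph G \<longleftrightarrow> finite (verts G) \<and> edges G \<subseteq> verts G \<times> verts G
     \<and> sym (edges G) \<and> (\<forall>v. (v, v) \<notin> edges G)"

definition path_graph :: "nat \<Rightarrow> nat graph" where
  "path_graph n = ({0..<n}, {(i, j). i < n \<and> j < n \<and> (j = i + 1 \<or> i = j + 1)})"

definition complete_graph :: "nat \<Rightarrow> nat graph" where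
  "complete_graph m = ({0..<m}, {(i, j). i < m \<and> j < m \<and> i \<noteq> j})"

definition strong_product :: "'a graph \<Rightarrow> 'b graph \<Rightarrow> ('a \<times> 'b) graph" where
  "strong_product G H = (verts G \<times> verts H,
     {((v, w), (v', w')). v \<in> verts G \<and> v' \<in> verts G \<and> w \<in> verts H \<and> w' \<in> verts H \<and>
        ((v = v' \<and> (w, w') \<in> edges H) \<or> (w = w' \<and> (v, v') \<in> edges G)
         \<or> ((v, v') \<in> edges G \<and> (w, w') \<in> edges H))})"

definition complete_join :: "'a graph \<Rightarrow> 'b graph \<Rightarrow> ('a + 'b) graph" where
  "complete_join G H = (Inl ` verts G \<union> Inr ` verts H,
     {(Inl u, Inl v) | u v. (u, v) \<in> edges G} \<union> {(Inr u, Inr v) | u v. (u, v) \<in> edges H}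
     \<union> {(Inl u, Inr v) | u v. u \<in> verts G \<and> v \<in> verts H}
     \<union> {(Inr v, Inl u) | u v. u \<in> verts G \<and> v \<in> verts H})"

definition subgraph_iso :: "'a graph \<Rightarrow> 'b graph \<Rightarrow> bool" where
  "subgraph_iso G H \<longleftrightarrow> (\<exists>f. inj_on f (verts G) \<and> f ` verts G \<subseteq> verts H \<and>
     (\<forall>u v. (u, v) \<in> edges G \<longrightarrow> (f u, f v) \<in> edges H))"

definition path_decomposition :: "'a graph \<Rightarrow> 'a set list \<Rightarrow> bool" where
  "path_decomposition G bs \<longleftrightarrow>
     (\<forall>B \<in> set bs. B \<subseteq> verts G) \<and>
     (\<forall>v \<in> verts G. \<exists>i < length bs. v \<in> bs ! i) \<and>
     (\<forall>u v. (u, v) \<in> edges G \<longrightarrow> (\<exists>i < length bs. u \<in> bs ! i \<and> v \<in> bs ! i)) \<and>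
     (\<forall>v i j k. i \<le> j \<and> j \<le> k \<and> k < length bs \<and> v \<in> bs ! i \<and> v \<in> bs ! k \<longrightarrow> v \<in> bs ! j)"

definition pathwidth :: "'a graph \<Rightarrow> nat" where
  "pathwidth G = (LEAST w. \<exists>bs. path_decomposition G bs \<and> (\<forall>B \<in> set bs. card B \<le> w + 1))"

end

theory Submission
  imports Defs "HOL-Library.Countable"
begin


fun wk :: "('a \<times> 'a) set \<Rightarrow> 'a list \<Rightarrow> bool" where
  "wk E [] = True"
| "wk E [x] = True"
| "wk E (x # y # r) = ((x = y \<or> (x, y) \<in> E) \<and> wk E (y # r))"

fun pth :: "('a \<times> 'a) set \<Rightarrow> 'a list \<Rightarrow> bool" where
  "pth E [] = True"
| "pth E [x] = True"
| "pth E (x # y # r) = ((x, y) \<in> E \<and> pth E (y # r))"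

lemma wk_append: "wk E (xs @ ys) \<Longrightarrow> wk E xs \<and> wk E ys"
proof (induction xs)
  case Nil then show ?case by simp
next
  case (Cons x xs)
  then show ?case by (cases xs; cases ys) auto
qed

lemma wk_snoc: "wk E (xs @ [y]) \<longleftrightarrow> wk E xs \<and> (xs \<noteq> [] \<longrightarrow> last xs = y \<or> (last xs, y) \<in> E)"
  by (induction E xs rule: wk.induct) auto

lemma wk_hd: "wk E (x # ys) \<Longrightarrow> ys \<noteq> [] \<Longrightarrow> x = hd ys \<or> (x, hd ys) \<in> E"
  by (cases ys) auto

lemma seg_lemma:
  "\<forall>zs. zs \<noteq> [] \<longrightarrow> hd zs = x \<longrightarrow> count_list zs x \<le> j \<longrightarrow> length zs \<ge> j * (F + 1) \<longrightarrow>
     (\<exists>pre ys post. zs = pre @ x # ys @ post \<and> x \<notin> set ys \<and> length ys \<ge> F)"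
proof (induction j)
  case 0
  show ?case
  proof (intro allI impI)
    fix zs :: "'a list" assume "zs \<noteq> []" "hd zs = x" "count_list zs x \<le> 0"
    then have "x \<in> set zs" by (cases zs) auto
    with \<open>count_list zs x \<le> 0\<close> show "\<exists>pre ys post. zs = pre @ x # ys @ post \<and> x \<notin> set ys \<and> length ys \<ge> F"
      by (simp add: count_list_0_iff)
  qed
next
  case (Suc j)
  show ?case
  proof (intro allI impI)
    fix zs :: "'a list" assume z: "zs \<noteq> []" "hd zs = x" "count_list zs x \<le> Suc j" "length zs \<ge> Suc j * (F + 1)"
    then obtain rest where zr: "zs = x # rest" by (cases zs) auto
    define sg where "sg = takeWhile (\<lambda>y. y \<noteq> x) rest"
    define tl where "tl = dropWhile (\<lambda>y. y \<noteq> x) rest"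
    have rs: "rest = sg @ tl" unfolding sg_def tl_def by simp
    have xs: "x \<notin> set sg" unfolding sg_def using set_takeWhileD by fastforce
    show "\<exists>pre ys post. zs = pre @ x # ys @ post \<and> x \<notin> set ys \<and> length ys \<ge> F"
    proof (cases "length sg \<ge> F")
      case True
      then show ?thesis using zr rs xs by (intro exI[of _ "[]"] exI[of _ sg] exI[of _ tl]) auto
    next
      case False
      show ?thesis
      proof (cases "tl = []")
        case True
        then have "length zs = Suc (length sg)" using zr rs by simp
        moreover have "Suc j * (F + 1) = j * (F + 1) + (F + 1)" by simp
        ultimately show ?thesis using False z(4) by linarith
      next
        case tne: False
        have "\<not> (hd tl \<noteq> x)" using hd_dropWhile[of "\<lambda>y. y \<noteq> x" rest] tne unfolding tl_def by blast
        then have "hd tl = x" by blast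
        then obtain tr where tr: "tl = x # tr" using tne by (cases tl) auto
        have c0: "count_list sg x = 0" using xs by (simp add: count_list_0_iff)
        have "count_list zs x = Suc (count_list tl x)" using zr rs c0 by simp
        then have ct: "count_list tl x \<le> j" using z(3) by simp
        have "length zs = Suc (length sg + length tl)" using zr rs by simp
        moreover have "Suc j * (F + 1) = j * (F + 1) + (F + 1)" by simp
        ultimately have lt: "length tl \<ge> j * (F + 1)" using z(4) False by linarith
        from Suc.IH[rule_format, OF tne \<open>hd tl = x\<close> ct lt]
        obtain pre ys post where "tl = pre @ x # ys @ post" "x \<notin> set ys" "length ys \<ge> F" by blast
        then show ?thesis using zr rs
          by (intro exI[of _ "x # sg @ pre"] exI[of _ ys] exI[of _ post]) auto
      qed
    qed
  qed
qed

fun Fw :: "nat \<Rightarrow> nat \<Rightarrow> nat" where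
  "Fw c 0 = 1"
| "Fw c (Suc n) = (c + 1) * (Fw c n + 1)"

lemma Fw_pos: "Fw c n \<ge> 1"
  by (induction n) auto

lemma walk_path:
  "xs \<noteq> [] \<Longrightarrow> wk E xs \<Longrightarrow> \<forall>y. count_list xs y \<le> c \<Longrightarrow> length xs \<ge> Fw c n \<Longrightarrow>
   \<exists>p. pth E p \<and> distinct p \<and> length p = Suc n \<and> hd p = hd xs \<and> set p \<subseteq> set xs"
proof (induction n arbitrary: xs)
  case 0
  then show ?case by (intro exI[of _ "[hd xs]"]) auto
next
  case (Suc n)
  define x where "x = hd xs"
  have cx: "count_list xs x \<le> c + 1" using Suc.prems(3) by (metis le_SucI Suc_eq_plus1)
  obtain pre ys post where sp: "xs = pre @ x # ys @ post" "x \<notin> set ys" "length ys \<ge> Fw c n"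
    using seg_lemma[of x "c+1" "Fw c n", rule_format, OF Suc.prems(1) x_def[symmetric] cx] Suc.prems(4)
    by auto
  have yne: "ys \<noteq> []" using sp(3) Fw_pos[of c n] by auto
  have w1: "wk E (x # ys @ post)" using wk_append[of E pre "x # ys @ post"] sp(1) Suc.prems(2) by simp
  have wys: "wk E ys" using wk_append[of E "[x]" "ys @ post"] wk_append[of E ys post] w1 by simp
  have cys: "\<forall>y. count_list ys y \<le> c"
  proof
    fix y have "count_list ys y \<le> count_list xs y" using sp(1) by simp
    then show "count_list ys y \<le> c" using Suc.prems(3) by (meson order_trans)
  qed
  obtain p where p: "pth E p" "distinct p" "length p = Suc n" "hd p = hd ys" "set p \<subseteq> set ys"
    using Suc.IH[OF yne wys cys sp(3)] by blast
  have "x \<noteq> hd ys" using sp(2) yne by auto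
  then have e: "(x, hd ys) \<in> E" using wk_hd[of E x "ys @ post"] w1 yne by auto
  obtain p1 pr where pp: "p = p1 # pr" using p(3) by (cases p) auto
  have "pth E (x # p)" using p(1) e p(4) pp by simp
  moreover have "x \<notin> set p" using p(5) sp(2) by auto
  moreover have "set (x # p) \<subseteq> set xs"
  proof -
    have "set ys \<subseteq> set xs" "x \<in> set xs" by (subst sp(1); auto)+
    then show ?thesis using p(5) by auto
  qed
  moreover have "hd (x # p) = hd xs" using x_def by simp
  moreover have "length (x # p) = Suc (Suc n)" using p(3) by simp
  moreover have "distinct (x # p)" using p(2) \<open>x \<notin> set p\<close> by simp
  ultimately show ?case by blast
qed



definition Vg :: "nat \<Rightarrow> nat \<Rightarrow> nat \<Rightarrow> (nat \<times> nat \<times> nat) set" where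
  "Vg C N k = {(0, d, a) | d a. d < k \<and> a < C ^ d} \<union> {(1, t, i) | t i. t < C ^ k \<and> i < N}"

definition Rg :: "nat \<Rightarrow> nat \<Rightarrow> nat \<times> nat \<times> nat \<Rightarrow> nat \<times> nat \<times> nat \<Rightarrow> bool" where
  "Rg C k u v \<longleftrightarrow> (\<exists>d a d' a'. u = (0, d, a) \<and> v = (0, d', a') \<and> d < d' \<and> a' div C ^ (d' - d) = a) \<or>
     (\<exists>d a t i. u = (0, d, a) \<and> v = (1, t, i) \<and> t div C ^ (k - d) = a) \<or>
     (\<exists>t i. u = (1, t, i) \<and> v = (1, t, Suc i))"

definition Eg :: "nat \<Rightarrow> nat \<Rightarrow> nat \<Rightarrow> ((nat \<times> nat \<times> nat) \<times> (nat \<times> nat \<times> nat)) set" where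
  "Eg C N k = {(u, v). u \<in> Vg C N k \<and> v \<in> Vg C N k \<and> (Rg C k u v \<or> Rg C k v u)}"

definition Sub :: "nat \<Rightarrow> nat \<Rightarrow> nat \<Rightarrow> nat \<Rightarrow> nat \<Rightarrow> (nat \<times> nat \<times> nat) set" where
  "Sub C N k d a = {v \<in> Vg C N k. v = (0, d, a) \<or> Rg C k (0, d, a) v}"

lemma finite_Vg: "finite (Vg C N k)"
proof -
  have "{(0::nat, d, a) | d a. d < k \<and> a < C ^ d} \<subseteq> (\<lambda>(d, a). (0, d, a)) ` (SIGMA d:{..<k}. {..<C ^ d})"
    by auto
  moreover have "{(1::nat, t, i) | t i. t < C ^ k \<and> i < N} \<subseteq> (\<lambda>(t, i). (1, t, i)) ` ({..<C ^ k} \<times> {..<N})"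
    by auto
  moreover have "finite ((\<lambda>(d, a). (0::nat, d, a)) ` (SIGMA d:{..<k}. {..<C ^ d}))" by auto
  moreover have "finite ((\<lambda>(t, i). (1::nat, t, i)) ` ({..<C ^ k} \<times> {..<N}))" by auto
  ultimately show ?thesis unfolding Vg_def
    using finite_subset by (metis (no_types, lifting) finite_Un)
qed

lemma div_pow_less: "0 < C \<Longrightarrow> d \<le> k \<Longrightarrow> t < C ^ k \<Longrightarrow> t div C ^ (k - d) < (C::nat) ^ d"
proof -
  assume a: "0 < C" "d \<le> k" "t < C ^ k"
  have "C ^ k = C ^ d * C ^ (k - d)" using a(2) by (simp add: power_add[symmetric])
  then show ?thesis using a by (simp add: div_less_iff_less_mult)
qed

lemma div_pow_split: "d < e \<Longrightarrow> (t::nat) div C ^ (e - d) = t div C ^ (e - Suc d) div C"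
proof -
  assume "d < e"
  then have "C ^ (e - d) = C ^ (e - Suc d) * C"
    by (metis Suc_diff_Suc mult.commute power_Suc)
  then show ?thesis by (simp add: div_mult2_eq)
qed

lemma child_div: "0 < C \<Longrightarrow> r < C \<Longrightarrow> ((a::nat) * C + r) div C = a"
  by simp

lemma Sub_key:
  assumes "v \<in> Sub C N k (Suc d) b"
  shows "(\<exists>d' a'. v = (0, d', a') \<and> Suc d \<le> d' \<and> a' div C ^ (d' - Suc d) = b) \<or>
         (\<exists>t i. v = (1, t, i) \<and> t div C ^ (k - Suc d) = b)"
  using assms unfolding Sub_def Rg_def by auto

lemma Sub_inj:
  assumes "v \<in> Sub C N k (Suc d) b" "v \<in> Sub C N k (Suc d) b'"
  shows "b = b'"
  using Sub_key[OF assms(1)] Sub_key[OF assms(2)] by auto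

lemma Sub_child:
  assumes "v \<in> Sub C N k (Suc d) (a * C + r)" "0 < C" "r < C" "d < k"
  shows "Rg C k (0, d, a) v"
  using Sub_key[OF assms(1)]
proof
  assume "\<exists>d' a'. v = (0, d', a') \<and> Suc d \<le> d' \<and> a' div C ^ (d' - Suc d) = a * C + r"
  then obtain d' a' where v: "v = (0, d', a')" "Suc d \<le> d'" "a' div C ^ (d' - Suc d) = a * C + r" by blast
  have "a' div C ^ (d' - d) = a" using div_pow_split[of d d' a' C] v(2,3) assms(2,3) by simp
  then show ?thesis using v unfolding Rg_def by auto
next
  assume "\<exists>t i. v = (1, t, i) \<and> t div C ^ (k - Suc d) = a * C + r"
  then obtain t i where v: "v = (1, t, i)" "t div C ^ (k - Suc d) = a * C + r" by blast
  have "t div C ^ (k - d) = a" using div_pow_split[of d k t C] v(2) assms(2,3,4) by simp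
  then show ?thesis using v unfolding Rg_def by auto
qed

lemma Sub_Vg: "Sub C N k d a \<subseteq> Vg C N k"
  unfolding Sub_def by auto

lemma wk_map_upt: "(\<forall>i. Suc i < N \<longrightarrow> g i = g (Suc i) \<or> (g i, g (Suc i)) \<in> E) \<Longrightarrow> wk E (map g [0..<N])"
proof (induction N)
  case 0 then show ?case by simp
next
  case (Suc N)
  have "wk E (map g [0..<N])" using Suc by auto
  moreover have "map g [0..<N] \<noteq> [] \<longrightarrow> last (map g [0..<N]) = g N \<or> (last (map g [0..<N]), g N) \<in> E"
  proof
    assume "map g [0..<N] \<noteq> []"
    then obtain M where "N = Suc M" by (cases N) auto
    then show "last (map g [0..<N]) = g N \<or> (last (map g [0..<N]), g N) \<in> E"
      using Suc.prems by (simp add: last_map)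
  qed
  ultimately show ?case by (simp add: wk_snoc)
qed

lemma count_map_upt: "count_list (map g [0..<N]) y = card {i. i < N \<and> g i = y}"
proof (induction N)
  case 0 then show ?case by simp
next
  case (Suc N)
  have eq: "{i. i < Suc N \<and> g i = y} = {i. i < N \<and> g i = y} \<union> (if g N = y then {N} else {})"
    by (auto simp: less_Suc_eq)
  show ?case using Suc by (simp add: eq)
qed



definition good :: "nat \<Rightarrow> ('b \<times> 'b) set \<Rightarrow> 'b set \<Rightarrow> nat \<Rightarrow> bool" where
  "good n EH S j \<longleftrightarrow> (\<exists>K p. finite K \<and> card K = j \<and> K \<subseteq> S \<and> set p \<subseteq> S \<and> distinct p \<and> length p = n \<and>
      pth EH p \<and> K \<inter> set p = {} \<and> (\<forall>x\<in>K. \<forall>y\<in>K. x \<noteq> y \<longrightarrow> (x, y) \<in> EH) \<and>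
      (\<forall>x\<in>K. \<forall>y\<in>set p. (x, y) \<in> EH \<and> (y, x) \<in> EH))"

lemma force:
  fixes \<phi> :: "nat \<times> nat \<times> nat \<Rightarrow> 'b"
  assumes hom: "\<And>u v. (u, v) \<in> Eg C N k \<Longrightarrow> \<phi> u = \<phi> v \<or> (\<phi> u, \<phi> v) \<in> EH"
    and fib: "\<And>h. card {v \<in> Vg C N k. \<phi> v = h} \<le> c" and Cc: "c < C"
    and irr: "\<And>x. (x, x) \<notin> EH"
    and NF: "N \<ge> Fw c (n - 1)" and n: "n \<ge> 1"
  shows "\<forall>d a S. k - d = j \<longrightarrow> d \<le> k \<longrightarrow> a < C ^ d \<longrightarrow> (\<forall>v \<in> Sub C N k d a. \<phi> v \<in> S) \<longrightarrow> good n EH S j"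
proof (induction j)
  case 0
  show ?case
  proof (intro allI impI)
    fix d a S assume d: "k - d = 0" "d \<le> k" "a < C ^ d" and sub: "\<forall>v \<in> Sub C N k d a. \<phi> v \<in> S"
    have dk: "d = k" using d by simp
    have inS: "(1, a, i) \<in> Sub C N k d a" if "i < N" for i
      using that d(3) dk unfolding Sub_def Vg_def Rg_def by auto
    define g where "g i = \<phi> (1, a, i)" for i
    define xs where "xs = map g [0..<N]"
    have N1: "N \<ge> 1" using NF Fw_pos[of c "n - 1"] by linarith
    have xne: "xs \<noteq> []" unfolding xs_def using N1 by simp
    have "wk EH xs" unfolding xs_def
    proof (rule wk_map_upt, intro allI impI)
      fix i assume "Suc i < N"
      then have "((1, a, i), (1, a, Suc i)) \<in> Eg C N k"
        using d(3) dk unfolding Eg_def Vg_def Rg_def by auto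
      then show "g i = g (Suc i) \<or> (g i, g (Suc i)) \<in> EH" unfolding g_def by (rule hom)
    qed
    moreover have "\<forall>y. count_list xs y \<le> c"
    proof
      fix y
      have "count_list xs y = card {i. i < N \<and> g i = y}" unfolding xs_def by (rule count_map_upt)
      also have "\<dots> = card ((\<lambda>i. (1::nat, a, i)) ` {i. i < N \<and> g i = y})"
        by (rule card_image[symmetric]) (auto simp: inj_on_def)
      also have "\<dots> \<le> card {v \<in> Vg C N k. \<phi> v = y}"
        apply (rule card_mono)
        using finite_Vg apply simp
        using inS Sub_Vg unfolding g_def by blast
      also have "\<dots> \<le> c" by (rule fib)
      finally show "count_list xs y \<le> c" .
    qed
    moreover have "length xs \<ge> Fw c (n - 1)" unfolding xs_def using NF by simp
    ultimately obtain p where p: "pth EH p" "distinct p" "length p = Suc (n - 1)" "set p \<subseteq> set xs"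
      using walk_path[OF xne] by blast
    have "set xs \<subseteq> S" unfolding xs_def g_def using sub inS by auto
    then show "good n EH S 0" unfolding good_def using p n
      by (intro exI[of _ "{}"] exI[of _ p]) auto
  qed
next
  case (Suc j)
  show ?case
  proof (intro allI impI)
    fix d a S assume d: "k - d = Suc j" "d \<le> k" "a < C ^ d" and sub: "\<forall>v \<in> Sub C N k d a. \<phi> v \<in> S"
    have dk: "d < k" using d by simp
    have C0: "0 < C" using Cc by simp
    define u0 where "u0 = (0::nat, d, a)"
    have u0V: "u0 \<in> Vg C N k" unfolding u0_def Vg_def using dk d(3) by auto
    have u0S: "u0 \<in> Sub C N k d a" unfolding Sub_def u0_def using u0V u0_def by auto
    define h where "h = \<phi> u0"
    have hS: "h \<in> S" using sub u0S h_def by auto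
    have "\<exists>r<C. \<forall>v \<in> Sub C N k (Suc d) (a * C + r). \<phi> v \<noteq> h"
    proof (rule ccontr)
      assume "\<not> ?thesis"
      then have "\<forall>r<C. \<exists>v. v \<in> Sub C N k (Suc d) (a * C + r) \<and> \<phi> v = h" by blast
      then obtain g where g: "\<And>r. r < C \<Longrightarrow> g r \<in> Sub C N k (Suc d) (a * C + r) \<and> \<phi> (g r) = h"
        by metis
      have inj: "inj_on g {..<C}"
      proof (rule inj_onI)
        fix r r' assume "r \<in> {..<C}" "r' \<in> {..<C}" "g r = g r'"
        then have "a * C + r = a * C + r'" using g Sub_inj by (metis lessThan_iff)
        then show "r = r'" by simp
      qed
      have nu: "u0 \<notin> g ` {..<C}"
      proof
        assume "u0 \<in> g ` {..<C}"
        then obtain r where "r < C" "u0 = g r" by auto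
        then have "u0 \<in> Sub C N k (Suc d) (a * C + r)" using g by auto
        then show False using Sub_key unfolding u0_def by fastforce
      qed
      have "card (insert u0 (g ` {..<C})) = Suc C"
        using nu inj by (simp add: card_image)
      moreover have "insert u0 (g ` {..<C}) \<subseteq> {v \<in> Vg C N k. \<phi> v = h}"
        using g u0V h_def Sub_Vg by fastforce
      ultimately have "Suc C \<le> card {v \<in> Vg C N k. \<phi> v = h}"
        using finite_Vg by (metis (no_types, lifting) card_mono finite_subset mem_Collect_eq subsetI)
      then show False using fib[of h] Cc by simp
    qed
    then obtain r where r: "r < C" "\<forall>v \<in> Sub C N k (Suc d) (a * C + r). \<phi> v \<noteq> h" by blast
    define S' where "S' = {y \<in> S. (h, y) \<in> EH \<and> (y, h) \<in> EH}"
    have sub': "\<forall>v \<in> Sub C N k (Suc d) (a * C + r). \<phi> v \<in> S'"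
    proof
      fix v assume v: "v \<in> Sub C N k (Suc d) (a * C + r)"
      have R: "Rg C k u0 v" using Sub_child[OF v C0 r(1) dk] u0_def by simp
      have vV: "v \<in> Vg C N k" using v Sub_Vg by blast
      have vS: "v \<in> Sub C N k d a" using R vV unfolding Sub_def u0_def by auto
      have e1: "(u0, v) \<in> Eg C N k" "(v, u0) \<in> Eg C N k" using R vV u0V unfolding Eg_def by auto
      have "\<phi> v \<noteq> h" using r(2) v by blast
      then show "\<phi> v \<in> S'" unfolding S'_def using hom[OF e1(1)] hom[OF e1(2)] sub vS h_def by auto
    qed
    have lt: "a * C + r < C ^ Suc d"
    proof -
      have "a * C + r < a * C + C" using r(1) by simp
      also have "\<dots> = (a + 1) * C" by simp
      also have "\<dots> \<le> C ^ d * C" using d(3) by (intro mult_right_mono) auto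
      finally show ?thesis by (simp add: mult.commute)
    qed
    have "good n EH S' j"
      using Suc.IH[rule_format, of "Suc d" "a * C + r" S'] d lt sub' by simp
    then obtain K p where fK: "finite K" and K: "card K = j" "K \<subseteq> S'" "set p \<subseteq> S'" "distinct p" "length p = n"
      "pth EH p" "K \<inter> set p = {}" "\<forall>x\<in>K. \<forall>y\<in>K. x \<noteq> y \<longrightarrow> (x, y) \<in> EH"
      "\<forall>x\<in>K. \<forall>y\<in>set p. (x, y) \<in> EH \<and> (y, x) \<in> EH"
      unfolding good_def by blast
    have hK: "h \<notin> K" using K(2) irr unfolding S'_def by auto
    have hp: "h \<notin> set p" using K(3) irr unfolding S'_def by auto
    have "card (insert h K) = Suc j" using fK hK K(1) by simp
    moreover have "insert h K \<subseteq> S" using K(2) hS unfolding S'_def by auto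
    moreover have "set p \<subseteq> S" using K(3) unfolding S'_def by auto
    moreover have "insert h K \<inter> set p = {}" using K(7) hp by auto
    moreover have "\<forall>x\<in>insert h K. \<forall>y\<in>insert h K. x \<noteq> y \<longrightarrow> (x, y) \<in> EH"
      using K(2,8) unfolding S'_def by auto
    moreover have "\<forall>x\<in>insert h K. \<forall>y\<in>set p. (x, y) \<in> EH \<and> (y, x) \<in> EH"
      using K(3,9) unfolding S'_def by auto
    moreover have "finite (insert h K)" using fK by simp
    ultimately show "good n EH S (Suc j)" unfolding good_def using K(4,5,6) by blast
  qed
qed



definition bag :: "nat \<Rightarrow> nat \<Rightarrow> nat \<Rightarrow> nat \<Rightarrow> (nat \<times> nat \<times> nat) set" where
  "bag C q k s = (\<lambda>d. (0, d, s div q div C ^ (k - d))) ` {..<k} \<union>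
     {(1, s div q, s mod q), (1, s div q, Suc (s mod q))}"

lemma mem_apex: "(0, d, a) \<in> bag C q k s \<longleftrightarrow> d < k \<and> a = s div q div C ^ (k - d)"
  unfolding bag_def by auto

lemma mem_path: "(1, t, i) \<in> bag C q k s \<longleftrightarrow> t = s div q \<and> (i = s mod q \<or> i = Suc (s mod q))"
  unfolding bag_def by auto

lemma mem_other: "x \<noteq> 0 \<Longrightarrow> x \<noteq> 1 \<Longrightarrow> (x, y, z) \<notin> bag C q k s"
  unfolding bag_def by auto

lemma card_bag: "card (bag C q k s) \<le> k + 2"
proof -
  have "card (bag C q k s) \<le> card ((\<lambda>d. (0::nat, d, s div q div C ^ (k - d))) ` {..<k}) +
     card {(1::nat, s div q, s mod q), (1, s div q, Suc (s mod q))}"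
    unfolding bag_def by (rule card_Un_le)
  moreover have "card ((\<lambda>d. (0::nat, d, s div q div C ^ (k - d))) ` {..<k}) \<le> k"
    using card_image_le[of "{..<k}"] by fastforce
  moreover have "card {(1::nat, s div q, s mod q), (1, s div q, Suc (s mod q))} \<le> 2"
    by (simp add: card_insert_le_m1)
  ultimately show ?thesis by linarith
qed

lemma tdiv: "0 < C \<Longrightarrow> a < C ^ d \<Longrightarrow> d \<le> k \<Longrightarrow> a * C ^ (k - d) < (C::nat) ^ k \<and> a * C ^ (k - d) div C ^ (k - d) = a"
proof -
  assume a: "0 < C" "a < C ^ d" "d \<le> k"
  have e: "C ^ k = C ^ d * C ^ (k - d)" using a(3) by (simp add: power_add[symmetric])
  have "a * C ^ (k - d) < C ^ d * C ^ (k - d)" using a by simp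
  then show ?thesis using e a by simp
qed

lemma tdiv2: "0 < C \<Longrightarrow> d < d' \<Longrightarrow> d' \<le> k \<Longrightarrow> ((a::nat) * C ^ (k - d')) div C ^ (k - d) = a div C ^ (d' - d)"
proof -
  assume a: "0 < C" "d < d'" "d' \<le> k"
  have e: "C ^ (k - d) = C ^ (k - d') * C ^ (d' - d)" using a by (simp add: power_add[symmetric])
  show ?thesis unfolding e div_mult2_eq using a by simp
qed

context
  fixes C N k q :: nat
  assumes C0: "0 < C" and N2: "N = Suc q" and q0: "0 < q"
begin

lemma pos_path: "t < C ^ k \<Longrightarrow> i < N \<Longrightarrow> \<exists>s < C ^ k * q. (1, t, i) \<in> bag C q k s \<and> s div q = t"
proof -
  assume a: "t < C ^ k" "i < N"
  define j where "j = (if i < q then i else q - 1)"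
  have j: "j < q" "i = j \<or> i = Suc j" using q0 N2 a(2) j_def by auto
  define s where "s = t * q + j"
  have "s < t * q + q" using j s_def by simp
  also have "\<dots> = (t + 1) * q" by simp
  also have "\<dots> \<le> C ^ k * q" using a(1) by (intro mult_right_mono) auto
  finally have sM: "s < C ^ k * q" .
  have sd: "s div q = t" "s mod q = j" using j(1) s_def by auto
  have "(1, t, i) \<in> bag C q k s" using sd j(2) by (intro mem_path[THEN iffD2]) auto
  then show ?thesis using sM sd by blast
qed

lemma bag_sub: "s < C ^ k * q \<Longrightarrow> bag C q k s \<subseteq> Vg C N k"
proof
  fix v assume s: "s < C ^ k * q" and v: "v \<in> bag C q k s"
  have t: "s div q < C ^ k" using s q0 by (simp add: div_less_iff_less_mult)
  have m: "s mod q < q" using q0 by simp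
  from v consider (ap) d where "d < k" "v = (0, d, s div q div C ^ (k - d))"
    | (p1) "v = (1, s div q, s mod q)" | (p2) "v = (1, s div q, Suc (s mod q))"
    unfolding bag_def by auto
  then show "v \<in> Vg C N k"
  proof cases
    case ap
    then show ?thesis using div_pow_less[OF C0 _ t, of d] unfolding Vg_def by auto
  next
    case p1 then show ?thesis using t m N2 unfolding Vg_def by auto
  next
    case p2 then show ?thesis using t m N2 unfolding Vg_def by auto
  qed
qed

lemma cover_apex: "d < k \<Longrightarrow> a < C ^ d \<Longrightarrow> \<exists>s < C ^ k * q. (0, d, a) \<in> bag C q k s"
proof -
  assume a: "d < k" "a < C ^ d"
  have td: "a * C ^ (k - d) < C ^ k" "a * C ^ (k - d) div C ^ (k - d) = a" using tdiv[OF C0 a(2) less_imp_le[OF a(1)]] by auto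
  obtain s where s: "s < C ^ k * q" "s div q = a * C ^ (k - d)"
    using pos_path[OF td(1), of 0] N2 by auto
  have "(0, d, a) \<in> bag C q k s" using a(1) s(2) td(2) by (intro mem_apex[THEN iffD2]) auto
  then show ?thesis using s(1) by blast
qed

lemma cover: "v \<in> Vg C N k \<Longrightarrow> \<exists>s < C ^ k * q. v \<in> bag C q k s"
  unfolding Vg_def using cover_apex pos_path by blast

lemma cover_edge: "u \<in> Vg C N k \<Longrightarrow> v \<in> Vg C N k \<Longrightarrow> Rg C k u v \<Longrightarrow>
   \<exists>s < C ^ k * q. u \<in> bag C q k s \<and> v \<in> bag C q k s"
proof -
  assume uV: "u \<in> Vg C N k" and vV: "v \<in> Vg C N k" and R: "Rg C k u v"
  from R consider (aa) d a d' a' where "u = (0, d, a)" "v = (0, d', a')" "d < d'" "a' div C ^ (d' - d) = a"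
    | (ap) d a t i where "u = (0, d, a)" "v = (1, t, i)" "t div C ^ (k - d) = a"
    | (pp) t i where "u = (1, t, i)" "v = (1, t, Suc i)"
    unfolding Rg_def by blast
  then show ?thesis
  proof cases
    case aa
    have d': "d' < k" "a' < C ^ d'" using vV aa(2) unfolding Vg_def by auto
    have td: "a' * C ^ (k - d') < C ^ k" "a' * C ^ (k - d') div C ^ (k - d') = a'" using tdiv[OF C0 d'(2) less_imp_le[OF d'(1)]] by auto
    obtain s where s: "s < C ^ k * q" "s div q = a' * C ^ (k - d')"
      using pos_path[OF td(1), of 0] N2 by auto
    have e: "a' * C ^ (k - d') div C ^ (k - d) = a" using tdiv2[OF C0 aa(3), of k a'] d' aa(4) by simp
    have "(0, d, a) \<in> bag C q k s" using aa(3) d' s(2) e by (intro mem_apex[THEN iffD2]) auto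
    moreover have "(0, d', a') \<in> bag C q k s" using d' s(2) td(2) by (intro mem_apex[THEN iffD2]) auto
    ultimately show ?thesis using s(1) aa(1,2) by blast
  next
    case ap
    have tv: "t < C ^ k" "i < N" using vV ap(2) unfolding Vg_def by auto
    have dk: "d < k" using uV ap(1) unfolding Vg_def by auto
    obtain s where s: "s < C ^ k * q" "(1, t, i) \<in> bag C q k s" "s div q = t"
      using pos_path[OF tv] by blast
    have "(0, d, a) \<in> bag C q k s" using dk s(3) ap(3) by (intro mem_apex[THEN iffD2]) auto
    then show ?thesis using s ap(1,2) by blast
  next
    case pp
    have tv: "t < C ^ k" "Suc i < N" using vV pp(2) unfolding Vg_def by auto
    define s where "s = t * q + i"
    have iq: "i < q" using tv N2 by simp
    have "s < t * q + q" using iq s_def by simp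
    also have "\<dots> = (t + 1) * q" by simp
    also have "\<dots> \<le> C ^ k * q" using tv(1) by (intro mult_right_mono) auto
    finally have sM: "s < C ^ k * q" .
    have sd: "s div q = t" "s mod q = i" using iq s_def by auto
    have "(1, t, i) \<in> bag C q k s" using sd by (intro mem_path[THEN iffD2]) auto
    moreover have "(1, t, Suc i) \<in> bag C q k s" using sd by (intro mem_path[THEN iffD2]) auto
    ultimately show ?thesis using sM pp by blast
  qed
qed

lemma interval:
  assumes "i \<le> j" "j \<le> l" "v \<in> bag C q k i" "v \<in> bag C q k l"
  shows "v \<in> bag C q k j"
proof -
  obtain x y z where v: "v = (x, y, z)" by (cases v) auto
  consider "x = 0" | "x = 1" | "x \<noteq> 0 \<and> x \<noteq> 1" by blast
  then show ?thesis
  proof cases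
    case 1
    have "(0, y, z) \<in> bag C q k i" "(0, y, z) \<in> bag C q k l" using assms(3,4) v 1 by auto
    then have a: "y < k" "z = i div q div C ^ (k - y)" "z = l div q div C ^ (k - y)"
      using mem_apex by blast+
    have "i div q div C ^ (k - y) \<le> j div q div C ^ (k - y)"
      using assms(1) by (intro div_le_mono)
    moreover have "j div q div C ^ (k - y) \<le> l div q div C ^ (k - y)"
      using assms(2) by (intro div_le_mono)
    ultimately have "z = j div q div C ^ (k - y)" using a by linarith
    then have "(0, y, z) \<in> bag C q k j" using a(1) by (intro mem_apex[THEN iffD2]) auto
    then show ?thesis using v 1 by simp
  next
    case 2
    have "(1, y, z) \<in> bag C q k i" "(1, y, z) \<in> bag C q k l" using assms(3,4) v 2 by auto
    then have a: "y = i div q" "z = i mod q \<or> z = Suc (i mod q)" "y = l div q" "z = l mod q \<or> z = Suc (l mod q)"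
      using mem_path by blast+
    have ei: "i = q * y + i mod q" using a(1) by simp
    have el: "l = q * y + l mod q" using a(3) by simp
    have "l \<le> i + 1" using ei el a(2,4) by linarith
    then have "j = i \<or> j = l" using assms(1,2) by linarith
    then show ?thesis using assms(3,4) by auto
  next
    case 3
    then show ?thesis using assms(3) v mem_other by blast
  qed
qed

lemma is_graph_G: "is_graph (Vg C N k, Eg C N k)"
proof -
  have irr: "\<not> Rg C k u u" for u unfolding Rg_def by auto
  show ?thesis unfolding is_graph_def verts_def edges_def
    using finite_Vg irr unfolding Eg_def sym_def by auto
qed

lemma pd_G: "path_decomposition (Vg C N k, Eg C N k) (map (bag C q k) [0..<C ^ k * q])"
  unfolding path_decomposition_def verts_def edges_def
proof (intro conjI allI impI ballI)
  fix B assume "B \<in> set (map (bag C q k) [0..<C ^ k * q])"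
  then obtain s where "s < C ^ k * q" "B = bag C q k s" by auto
  then show "B \<subseteq> fst (Vg C N k, Eg C N k)" using bag_sub by simp
next
  fix v assume "v \<in> fst (Vg C N k, Eg C N k)"
  then have "v \<in> Vg C N k" by simp
  then obtain s where "s < C ^ k * q" "v \<in> bag C q k s" using cover by blast
  then show "\<exists>i<length (map (bag C q k) [0..<C ^ k * q]). v \<in> map (bag C q k) [0..<C ^ k * q] ! i"
    by auto
next
  fix u v assume "(u, v) \<in> snd (Vg C N k, Eg C N k)"
  then have uv: "u \<in> Vg C N k" "v \<in> Vg C N k" "Rg C k u v \<or> Rg C k v u" unfolding Eg_def by auto
  then obtain s where "s < C ^ k * q" "u \<in> bag C q k s" "v \<in> bag C q k s"
    using cover_edge by blast
  then show "\<exists>i<length (map (bag C q k) [0..<C ^ k * q]).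
            u \<in> map (bag C q k) [0..<C ^ k * q] ! i \<and> v \<in> map (bag C q k) [0..<C ^ k * q] ! i"
    by auto
next
  fix v i j l
  assume "i \<le> j \<and> j \<le> l \<and> l < length (map (bag C q k) [0..<C ^ k * q]) \<and>
       v \<in> map (bag C q k) [0..<C ^ k * q] ! i \<and> v \<in> map (bag C q k) [0..<C ^ k * q] ! l"
  then have h: "i \<le> j" "j \<le> l" "l < C ^ k * q" "v \<in> bag C q k i" "v \<in> bag C q k l" by auto
  then have "v \<in> bag C q k j" using interval[of i j l v] by blast
  then show "v \<in> map (bag C q k) [0..<C ^ k * q] ! j" using h by simp
qed

end



definition imG :: "('a \<Rightarrow> 'b) \<Rightarrow> 'a graph \<Rightarrow> 'b graph" where
  "imG g G = (g ` verts G, map_prod g g ` edges G)"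

lemma imG_verts: "verts (imG g G) = g ` verts G" unfolding imG_def verts_def by simp
lemma imG_edges: "edges (imG g G) = map_prod g g ` edges G" unfolding imG_def edges_def by simp

lemma imG_graph: assumes "inj g" "is_graph G" shows "is_graph (imG g G)"
proof -
  have f: "finite (verts G)" and e: "edges G \<subseteq> verts G \<times> verts G" and s: "sym (edges G)"
    and i: "\<And>v. (v, v) \<notin> edges G" using assms(2) unfolding is_graph_def by auto
  have "finite (verts (imG g G))" using f unfolding imG_verts by simp
  moreover have "edges (imG g G) \<subseteq> verts (imG g G) \<times> verts (imG g G)"
    using e unfolding imG_verts imG_edges by auto
  moreover have "sym (edges (imG g G))"
    using s unfolding imG_edges sym_def by auto
  moreover have "\<forall>v. (v, v) \<notin> edges (imG g G)"
    using i assms(1) unfolding imG_edges by (auto simp: inj_eq)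
  ultimately show ?thesis unfolding is_graph_def by blast
qed

lemma imG_pd: assumes "inj g" "path_decomposition G bs"
  shows "path_decomposition (imG g G) (map (image g) bs)"
proof -
  have a1: "\<forall>B \<in> set bs. B \<subseteq> verts G"
   and a2: "\<forall>v \<in> verts G. \<exists>i < length bs. v \<in> bs ! i"
   and a3: "\<forall>u v. (u, v) \<in> edges G \<longrightarrow> (\<exists>i < length bs. u \<in> bs ! i \<and> v \<in> bs ! i)"
   and a4: "\<forall>v i j k. i \<le> j \<and> j \<le> k \<and> k < length bs \<and> v \<in> bs ! i \<and> v \<in> bs ! k \<longrightarrow> v \<in> bs ! j"
    using assms(2) unfolding path_decomposition_def by blast+
  have mem: "g v \<in> g ` B \<longleftrightarrow> v \<in> B" for v B using assms(1) by (auto simp: inj_eq)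
  have b1: "\<forall>B \<in> set (map (image g) bs). B \<subseteq> g ` verts G" using a1 by auto
  have b2: "\<forall>w \<in> g ` verts G. \<exists>i < length (map (image g) bs). w \<in> map (image g) bs ! i"
  proof
    fix w assume "w \<in> g ` verts G"
    then obtain v where v: "v \<in> verts G" "w = g v" by blast
    then obtain i where "i < length bs" "v \<in> bs ! i" using a2 by blast
    then show "\<exists>i < length (map (image g) bs). w \<in> map (image g) bs ! i" using v(2) by (intro exI[of _ i]) simp
  qed
  have b3: "\<forall>w1 w2. (w1, w2) \<in> map_prod g g ` edges G \<longrightarrow>
      (\<exists>i < length (map (image g) bs). w1 \<in> map (image g) bs ! i \<and> w2 \<in> map (image g) bs ! i)"
  proof (intro allI impI)
    fix w1 w2 assume "(w1, w2) \<in> map_prod g g ` edges G"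
    then obtain u v where uv: "(u, v) \<in> edges G" "w1 = g u" "w2 = g v" by auto
    then obtain i where "i < length bs" "u \<in> bs ! i" "v \<in> bs ! i" using a3 by blast
    then show "\<exists>i < length (map (image g) bs). w1 \<in> map (image g) bs ! i \<and> w2 \<in> map (image g) bs ! i"
      using uv(2,3) by (intro exI[of _ i]) simp
  qed
  have b4: "\<forall>w i j k. i \<le> j \<and> j \<le> k \<and> k < length (map (image g) bs) \<and> w \<in> map (image g) bs ! i \<and>
      w \<in> map (image g) bs ! k \<longrightarrow> w \<in> map (image g) bs ! j"
  proof (intro allI impI)
    fix w i j k assume h: "i \<le> j \<and> j \<le> k \<and> k < length (map (image g) bs) \<and> w \<in> map (image g) bs ! i \<and> w \<in> map (image g) bs ! k"
    then have h2: "i \<le> j" "j \<le> k" "k < length bs" "w \<in> g ` (bs ! i)" "w \<in> g ` (bs ! k)" by auto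
    then obtain v where v: "v \<in> bs ! i" "w = g v" by blast
    then have "v \<in> bs ! k" using h2(5) mem by blast
    then have "v \<in> bs ! j" using a4 h2(1,2,3) v(1) by blast
    then show "w \<in> map (image g) bs ! j" using h2 v(2) by simp
  qed
  show ?thesis unfolding path_decomposition_def imG_verts imG_edges using b1 b2 b3 b4 by blast
qed

lemma imG_sub: assumes "inj g" "subgraph_iso (imG g G) X" shows "subgraph_iso G X"
proof -
  obtain f where f: "inj_on f (verts (imG g G))" "f ` verts (imG g G) \<subseteq> verts X"
    "\<forall>u v. (u, v) \<in> edges (imG g G) \<longrightarrow> (f u, f v) \<in> edges X"
    using assms(2) unfolding subgraph_iso_def by blast
  have "inj_on (f \<circ> g) (verts G)"
    using f(1) assms(1) unfolding imG_verts by (meson comp_inj_on inj_on_subset subset_UNIV)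
  moreover have "(f \<circ> g) ` verts G \<subseteq> verts X" using f(2) unfolding imG_verts by auto
  moreover have "\<forall>u v. (u, v) \<in> edges G \<longrightarrow> ((f \<circ> g) u, (f \<circ> g) v) \<in> edges X"
    using f(3) unfolding imG_edges by auto
  ultimately show ?thesis unfolding subgraph_iso_def by blast
qed

lemma pw_le: assumes "path_decomposition G bs" "\<forall>B \<in> set bs. card B \<le> w + 1"
  shows "pathwidth G \<le> w"
  unfolding pathwidth_def using assms by (intro Least_le) blast

lemma sp_edge: "((x, y), (x', y')) \<in> edges (strong_product G H) \<Longrightarrow>
   (x = x' \<or> (x, x') \<in> edges G) \<and> (y = y' \<or> (y, y') \<in> edges H)"
  unfolding strong_product_def edges_def by auto

lemma sp_vert: "(x, y) \<in> verts (strong_product G H) \<Longrightarrow> x \<in> verts G \<and> y \<in> verts H"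
  unfolding strong_product_def verts_def by auto

lemma pth_nth: "pth E p \<Longrightarrow> Suc i < length p \<Longrightarrow> (p ! i, p ! Suc i) \<in> E"
proof (induction E p arbitrary: i rule: pth.induct)
  case (3 E x y r)
  then show ?case by (cases i) auto
qed auto



lemma final_iso:
  fixes EH :: "(nat \<times> nat) set"
  assumes g: "good n EH S k" and sy: "sym EH" and SV: "S \<subseteq> V"
  shows "subgraph_iso (complete_join (path_graph n) (complete_graph k)) (V, EH)"
proof -
  obtain K p where fK: "finite K" and K: "card K = k" "K \<subseteq> S" "set p \<subseteq> S" "distinct p" "length p = n"
      "pth EH p" "K \<inter> set p = {}" "\<forall>x\<in>K. \<forall>y\<in>K. x \<noteq> y \<longrightarrow> (x, y) \<in> EH"
      "\<forall>x\<in>K. \<forall>y\<in>set p. (x, y) \<in> EH \<and> (y, x) \<in> EH"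
    using g unfolding good_def by blast
  obtain kl where kl: "set kl = K" "distinct kl" using finite_distinct_list[OF fK] by blast
  have lkl: "length kl = k" using kl K(1) distinct_card by fastforce
  define F where "F x = (case x of Inl i \<Rightarrow> p ! i | Inr j \<Rightarrow> kl ! j)" for x
  have VJ: "verts (complete_join (path_graph n) (complete_graph k)) = Inl ` {0..<n} \<union> Inr ` {0..<k}"
    unfolding complete_join_def verts_def path_graph_def complete_graph_def by simp
  have pin: "p ! i \<in> set p" if "i < n" for i using that K(5) by simp
  have kin: "kl ! j \<in> K" if "j < k" for j using that lkl kl(1) by auto
  have "inj_on F (Inl ` {0..<n} \<union> Inr ` {0..<k})"
  proof (rule inj_onI)
    fix x y assume x: "x \<in> Inl ` {0..<n} \<union> Inr ` {0..<k}" and y: "y \<in> Inl ` {0..<n} \<union> Inr ` {0..<k}"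
      and e: "F x = F y"
    show "x = y"
    proof (cases x)
      case (Inl i)
      then have i: "i < n" using x by auto
      show ?thesis
      proof (cases y)
        case (Inl i')
        then have "i' < n" using y by auto
        then show ?thesis using e Inl \<open>x = Inl i\<close> i K(4,5) F_def by (simp add: nth_eq_iff_index_eq)
      next
        case (Inr j)
        then have "j < k" using y by auto
        then show ?thesis using e Inr \<open>x = Inl i\<close> i pin kin K(7) F_def by force
      qed
    next
      case (Inr j)
      then have j: "j < k" using x by auto
      show ?thesis
      proof (cases y)
        case (Inl i')
        then have "i' < n" using y by auto
        then show ?thesis using e Inl \<open>x = Inr j\<close> j pin kin K(7) F_def by force
      next
        case (Inr j')
        then have "j' < k" using y by auto
        then show ?thesis using e Inr \<open>x = Inr j\<close> j kl(2) lkl F_def by (simp add: nth_eq_iff_index_eq)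
      qed
    qed
  qed
  moreover have "F ` (Inl ` {0..<n} \<union> Inr ` {0..<k}) \<subseteq> V"
  proof -
    have a: "\<forall>i<n. p ! i \<in> V" using pin K(3) SV by blast
    have b: "\<forall>j<k. kl ! j \<in> V" using kin K(2) SV by blast
    show ?thesis using a b unfolding F_def by auto
  qed
  moreover have "\<forall>u v. (u, v) \<in> edges (complete_join (path_graph n) (complete_graph k)) \<longrightarrow> (F u, F v) \<in> EH"
  proof (intro allI impI)
    fix u v assume uv: "(u, v) \<in> edges (complete_join (path_graph n) (complete_graph k))"
    then consider (pp) i j where "u = Inl i" "v = Inl j" "i < n" "j < n" "j = Suc i \<or> i = Suc j"
      | (kk) i j where "u = Inr i" "v = Inr j" "i < k" "j < k" "i \<noteq> j"
      | (pk) i j where "u = Inl i" "v = Inr j" "i < n" "j < k"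
      | (kp) i j where "u = Inr j" "v = Inl i" "i < n" "j < k"
      unfolding complete_join_def edges_def verts_def path_graph_def complete_graph_def by auto
    then show "(F u, F v) \<in> EH"
    proof cases
      case pp
      show ?thesis
      proof (cases "j = Suc i")
        case True
        then show ?thesis using pth_nth[OF K(6), of i] pp K(5) F_def by simp
      next
        case False
        then have "i = Suc j" using pp by simp
        then have "(p ! j, p ! i) \<in> EH" using pth_nth[OF K(6), of j] pp K(5) by simp
        then show ?thesis using sy pp F_def by (simp add: sym_def)
      qed
    next
      case kk
      have "kl ! i \<noteq> kl ! j" using kk kl(2) lkl by (simp add: nth_eq_iff_index_eq)
      then show ?thesis using kk kin K(8) F_def by simp
    next
      case pk
      then show ?thesis using pin kin K(9) F_def by simp
    next
      case kp
      then show ?thesis using pin kin K(9) F_def by simp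
    qed
  qed
  ultimately show ?thesis unfolding subgraph_iso_def VJ edges_def[of "(V, EH)"] verts_def[of "(V, EH)"]
    by (intro exI[of _ F]) simp
qed



lemma sp_edge': "(a, b) \<in> edges (strong_product G H) \<Longrightarrow>
   (fst a = fst b \<or> (fst a, fst b) \<in> edges G) \<and> (snd a = snd b \<or> (snd a, snd b) \<in> edges H)"
  using sp_edge[of "fst a" "snd a" "fst b" "snd b" G H] by simp

lemma sp_vert': "a \<in> verts (strong_product G H) \<Longrightarrow> fst a \<in> verts G \<and> snd a \<in> verts H"
  using sp_vert[of "fst a" "snd a" G H] by simp

theorem proposition10:
  fixes k l n :: nat
  assumes "k \<ge> 1" and "l \<ge> 1" and "n \<ge> 1"
  shows "\<exists>G :: nat graph. is_graph G \<and> pathwidth G \<le> k + 1 \<and>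
    (\<forall>(H :: nat graph) m. is_graph H \<longrightarrow> m \<ge> 1 \<longrightarrow>
       subgraph_iso G (strong_product (strong_product H (path_graph m)) (complete_graph l)) \<longrightarrow>
       subgraph_iso (complete_join (path_graph n) (complete_graph k)) H)"
proof -
  define c where "c = 3 * l"
  define C where "C = 3 * l + 1"
  define q where "q = max 1 (Fw c (n - 1))"
  define N where "N = Suc q"
  define G where "G = imG (to_nat :: nat \<times> nat \<times> nat \<Rightarrow> nat) (Vg C N k, Eg C N k)"
  have C0: "0 < C" and q0: "0 < q" and N2: "N = Suc q" and Cc: "c < C" and NF: "N \<ge> Fw c (n - 1)"
    unfolding C_def q_def N_def c_def by auto
  have inj: "inj (to_nat :: nat \<times> nat \<times> nat \<Rightarrow> nat)" by (rule inj_to_nat)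
  have ig: "is_graph (Vg C N k, Eg C N k)" by (rule is_graph_G[OF C0 N2 q0])
  have gG: "is_graph G" unfolding G_def by (rule imG_graph[OF inj ig])
  have pdG: "path_decomposition G (map (image to_nat) (map (bag C q k) [0..<C ^ k * q]))"
    unfolding G_def by (rule imG_pd[OF inj pd_G[OF C0 N2 q0]])
  have "\<forall>B \<in> set (map (image to_nat) (map (bag C q k) [0..<C ^ k * q])). card B \<le> (k + 1) + 1"
  proof
    fix B assume "B \<in> set (map (image to_nat) (map (bag C q k) [0..<C ^ k * q]))"
    then obtain s where "B = to_nat ` bag C q k s" by auto
    moreover have "finite (bag C q k s)" unfolding bag_def by simp
    ultimately have "card B \<le> card (bag C q k s)" by (simp add: card_image_le)
    also have "\<dots> \<le> k + 2" by (rule card_bag)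
    finally show "card B \<le> (k + 1) + 1" by simp
  qed
  then have pwG: "pathwidth G \<le> k + 1" using pw_le[OF pdG] by blast
  have main: "subgraph_iso (complete_join (path_graph n) (complete_graph k)) H"
    if isH: "is_graph H" and m1: "m \<ge> 1"
      and sub: "subgraph_iso G (strong_product (strong_product H (path_graph m)) (complete_graph l))"
    for H :: "nat graph" and m
  proof -
    define X where "X = strong_product (strong_product H (path_graph m)) (complete_graph l)"
    have "subgraph_iso (Vg C N k, Eg C N k) X" using imG_sub[OF inj] sub unfolding G_def X_def by blast
    then obtain f where f: "inj_on f (Vg C N k)" "f ` Vg C N k \<subseteq> verts X"
      "\<forall>u v. (u, v) \<in> Eg C N k \<longrightarrow> (f u, f v) \<in> edges X"
      unfolding subgraph_iso_def verts_def[of "(Vg C N k, Eg C N k)"] edges_def[of "(Vg C N k, Eg C N k)"]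
      by auto
    define \<phi> where "\<phi> v = fst (fst (f v))" for v
    have irr: "\<And>x. (x, x) \<notin> edges H" using isH unfolding is_graph_def by auto
    have syH: "sym (edges H)" using isH unfolding is_graph_def by auto
    have hom: "\<phi> u = \<phi> v \<or> (\<phi> u, \<phi> v) \<in> edges H" if "(u, v) \<in> Eg C N k" for u v
    proof -
      have "(f u, f v) \<in> edges X" using f(3) that by blast
      then have "fst (f u) = fst (f v) \<or> (fst (f u), fst (f v)) \<in> edges (strong_product H (path_graph m))"
        unfolding X_def using sp_edge' by blast
      then show ?thesis unfolding \<phi>_def using sp_edge'[of "fst (f u)" "fst (f v)" H "path_graph m"] by auto
    qed
    have vH: "\<phi> v \<in> verts H" if "v \<in> Vg C N k" for v
    proof -
      have "f v \<in> verts X" using f(2) that by blast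
      then have "fst (f v) \<in> verts (strong_product H (path_graph m))" unfolding X_def using sp_vert' by blast
      then show ?thesis unfolding \<phi>_def using sp_vert'[of "fst (f v)" H "path_graph m"] by blast
    qed
    define r0 where "r0 = (0::nat, 0::nat, 0::nat)"
    have r0V: "r0 \<in> Vg C N k" unfolding r0_def Vg_def using assms(1) by auto
    have adj: "(r0, v) \<in> Eg C N k" if "v \<in> Vg C N k" "v \<noteq> r0" for v
    proof -
      have "Rg C k r0 v"
      proof -
        from that(1) consider (a) d a where "v = (0, d, a)" "d < k" "a < C ^ d"
          | (p) t i where "v = (1, t, i)" "t < C ^ k" "i < N"
          unfolding Vg_def by blast
        then show ?thesis
        proof cases
          case a
          have "d \<noteq> 0"
          proof
            assume "d = 0"
            then have "a = 0" using a(3) by simp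
            then show False using a(1) \<open>d = 0\<close> that(2) unfolding r0_def by simp
          qed
          then show ?thesis using a unfolding Rg_def r0_def by auto
        next
          case p
          then show ?thesis unfolding Rg_def r0_def by auto
        qed
      qed
      then show ?thesis using that r0V unfolding Eg_def by auto
    qed
    define p0 where "p0 = snd (fst (f r0))"
    have fib: "card {v \<in> Vg C N k. \<phi> v = h} \<le> c" for h
    proof -
      let ?F = "{v \<in> Vg C N k. \<phi> v = h}"
      let ?T = "({h} \<times> {p0 - 1..p0 + 1}) \<times> {0..<l}"
      have "f ` ?F \<subseteq> ?T"
      proof
        fix w assume "w \<in> f ` ?F"
        then obtain v where v: "v \<in> Vg C N k" "\<phi> v = h" "w = f v" by blast
        have fvX: "f v \<in> verts X" using f(2) v(1) by blast
        then have c1: "snd (f v) \<in> verts (complete_graph l)" unfolding X_def using sp_vert' by blast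
        then have c2: "snd (f v) < l" unfolding complete_graph_def verts_def by simp
        have "snd (fst (f v)) \<in> {p0 - 1..p0 + 1}"
        proof (cases "v = r0")
          case True then show ?thesis unfolding p0_def by simp
        next
          case False
          have "(f r0, f v) \<in> edges X" using f(3) adj[OF v(1) False] by blast
          then have "fst (f r0) = fst (f v) \<or> (fst (f r0), fst (f v)) \<in> edges (strong_product H (path_graph m))"
            unfolding X_def using sp_edge' by blast
          then have "p0 = snd (fst (f v)) \<or> (p0, snd (fst (f v))) \<in> edges (path_graph m)"
            unfolding p0_def using sp_edge'[of "fst (f r0)" "fst (f v)" H "path_graph m"] by auto
          then show ?thesis unfolding path_graph_def edges_def by auto
        qed
        then show "w \<in> ?T" using v c2 unfolding \<phi>_def by (cases "f v") auto
      qed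
      moreover have "card ?T \<le> 3 * l"
      proof -
        have "card {p0 - 1..p0 + 1} \<le> 3" by simp
        then have "card ?T = card {p0 - 1..p0 + 1} * l" by (simp add: card_cartesian_product)
        also have "\<dots> \<le> 3 * l" using \<open>card {p0 - 1..p0 + 1} \<le> 3\<close> by simp
        finally show ?thesis .
      qed
      moreover have inj': "inj_on f ?F" by (rule inj_on_subset[OF f(1)]) blast
      moreover have "finite ?T" by simp
      ultimately have "card (f ` ?F) \<le> card ?T" by (intro card_mono) auto
      then have "card ?F \<le> card ?T" by (simp add: card_image[OF inj'])
      then show ?thesis unfolding c_def using \<open>card ?T \<le> 3 * l\<close> by linarith
    qed
    have fo: "\<forall>d a S. k - d = k \<longrightarrow> d \<le> k \<longrightarrow> a < C ^ d \<longrightarrow> (\<forall>v \<in> Sub C N k d a. \<phi> v \<in> S) \<longrightarrow> good n (edges H) S k"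
      by (rule force[of C N k \<phi> "edges H" c n, OF hom fib Cc irr NF assms(3)])
    have s0: "\<forall>v \<in> Sub C N k 0 0. \<phi> v \<in> verts H" using vH Sub_Vg by blast
    have gd: "good n (edges H) (verts H) k" by (rule fo[rule_format, of 0 0 "verts H"]) (use s0 in auto)
    have "subgraph_iso (complete_join (path_graph n) (complete_graph k)) (verts H, edges H)"
      by (rule final_iso[OF gd syH subset_refl])
    moreover have "(verts H, edges H) = H" unfolding verts_def edges_def by simp
    ultimately show ?thesis by simp
  qed
  show ?thesis using gG pwG main by blast
qed


end
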